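(* Let $(M,d)$ be a complete pointed metric space and let $\nu$ be a positive Radon measure on $\beta\widetilde{M}$. Then there exists a $\preccurlyeq$-minimal positive Radon measure $\mu$ on $\beta\widetilde{M}$ with $\mu\preccurlyeq\nu$.
   Context: $\widetilde{M}=\{(x,y)\in M\times M:x\ne y\}$, $\beta\widetilde{M}$ its Stone–Čech compactification; Radon measures identified with $C(\beta\widetilde{M})^*$. $G$ is the set of $g\in C(\beta\widetilde{M})$ with $d(x,y)g(x,y)\le d(x,u)g(x,u)+d(u,y)g(u,y)$ for all distinct $x,u,y\in M$. For positive Radon measures, $\mu\preccurlyeq\nu$ iff $\int g\,d\mu\le\int g\,d\nu$ for all $g\in G$; $\mu$ is $\preccurlyeq$-minimal if every positive $\lambda$ with $\lambda\preccurlyeq\mu$ satisfies $\mu\preccurlyeq\lambda$. Throughout, $M$ has at least three distinct points. *)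

theory Defs
  imports "HOL-Analysis.Analysis"
begin

definition offdiag :: "('a \<times> 'a) set" where
  "offdiag = {p. fst p \<noteq> snd p}"

text \<open>Bounded continuous real functions on M~; by the universal property of
  the Stone-Cech compactification these are exactly the restrictions to M~ of
  the elements of C(beta M~).\<close>
definition Cb :: "(('a::metric_space \<times> 'a) \<Rightarrow> real) set" where
  "Cb = {f. continuous_on offdiag f \<and> bounded (f ` offdiag)}"

text \<open>Positive Radon measures on beta M~, identified with positive linear
  functionals on C(beta M~) = C_b(M~) (Riesz; positive functionals are
  automatically bounded).\<close>
definition positive_radon :: "((('a::metric_space \<times> 'a) \<Rightarrow> real) \<Rightarrow> real) \<Rightarrow> bool" where
  "positive_radon \<mu> \<longleftrightarrow>
     (\<forall>f\<in>Cb. \<forall>g\<in>Cb. \<mu> (\<lambda>p. f p + g p) = \<mu> f + \<mu> g) \<and>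
     (\<forall>f\<in>Cb. \<forall>c. \<mu> (\<lambda>p. c * f p) = c * \<mu> f) \<and>
     (\<forall>f\<in>Cb. (\<forall>p\<in>offdiag. 0 \<le> f p) \<longrightarrow> 0 \<le> \<mu> f)"

definition Gcone :: "(('a::metric_space \<times> 'a) \<Rightarrow> real) set" where
  "Gcone = {g\<in>Cb. \<forall>x u y. x \<noteq> u \<and> u \<noteq> y \<and> x \<noteq> y \<longrightarrow>
      dist x y * g (x, y) \<le> dist x u * g (x, u) + dist u y * g (u, y)}"

definition preceq :: "((('a::metric_space \<times> 'a) \<Rightarrow> real) \<Rightarrow> real) \<Rightarrow> ((('a \<times> 'a) \<Rightarrow> real) \<Rightarrow> real) \<Rightarrow> bool"
  (infix "\<preccurlyeq>" 50) where
  "\<mu> \<preccurlyeq> \<nu> \<longleftrightarrow> (\<forall>g\<in>Gcone. \<mu> g \<le> \<nu> g)"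

definition preceq_minimal :: "((('a::metric_space \<times> 'a) \<Rightarrow> real) \<Rightarrow> real) \<Rightarrow> bool" where
  "preceq_minimal \<mu> \<longleftrightarrow> (\<forall>\<kappa>. positive_radon \<kappa> \<and> \<kappa> \<preccurlyeq> \<mu> \<longrightarrow> \<mu> \<preccurlyeq> \<kappa>)"

end

theory Submission
  imports Defs
begin

lemma Cb_const: "(\<lambda>_. c) \<in> Cb"
  unfolding Cb_def by (auto intro!: continuous_intros simp: bounded_insert image_constant_conv)

lemma Cb_add: "f \<in> Cb \<Longrightarrow> g \<in> Cb \<Longrightarrow> (\<lambda>p. f p + g p) \<in> Cb"
  unfolding Cb_def by (auto intro!: continuous_intros bounded_plus_comp)

lemma Cb_scale: "f \<in> Cb \<Longrightarrow> (\<lambda>p. c * f p) \<in> Cb"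
proof -
  assume "f \<in> Cb"
  then have c: "continuous_on offdiag f" and b: "bounded (f ` offdiag)" by (auto simp: Cb_def)
  from b obtain B where B: "\<forall>p\<in>offdiag. \<bar>f p\<bar> \<le> B" by (auto simp: bounded_iff)
  have "\<forall>p\<in>offdiag. \<bar>c * f p\<bar> \<le> \<bar>c\<bar> * B"
    using B by (auto simp: abs_mult intro: mult_left_mono)
  then have "bounded ((\<lambda>p. c * f p) ` offdiag)" unfolding bounded_iff by auto
  then show ?thesis using c by (auto simp: Cb_def intro!: continuous_intros)
qed

lemma one_G: "(\<lambda>_. 1) \<in> Gcone"
  unfolding Gcone_def by (auto simp: Cb_const dist_triangle)

lemma G_Cb: "Gcone \<subseteq> Cb"
  unfolding Gcone_def by auto

lemma pr_add: "positive_radon \<mu> \<Longrightarrow> f \<in> Cb \<Longrightarrow> g \<in> Cb \<Longrightarrow> \<mu> (\<lambda>p. f p + g p) = \<mu> f + \<mu> g"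
  unfolding positive_radon_def by blast

lemma pr_scale: "positive_radon \<mu> \<Longrightarrow> f \<in> Cb \<Longrightarrow> \<mu> (\<lambda>p. c * f p) = c * \<mu> f"
  unfolding positive_radon_def by blast

lemma pr_pos: "positive_radon \<mu> \<Longrightarrow> f \<in> Cb \<Longrightarrow> (\<forall>p\<in>offdiag. 0 \<le> f p) \<Longrightarrow> 0 \<le> \<mu> f"
  unfolding positive_radon_def by blast

lemma pr_diff:
  assumes "positive_radon \<mu>" "f \<in> Cb" "g \<in> Cb"
  shows "\<mu> (\<lambda>p. f p - g p) = \<mu> f - \<mu> g"
proof -
  have e: "(\<lambda>p. f p - g p) = (\<lambda>p. f p + (\<lambda>q. (-1) * g q) p)" by auto
  have "\<mu> (\<lambda>p. f p + (\<lambda>q. (-1) * g q) p) = \<mu> f + \<mu> (\<lambda>q. (-1) * g q)"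
    by (rule pr_add[OF assms(1,2) Cb_scale[OF assms(3)]])
  moreover have "\<mu> (\<lambda>q. (-1) * g q) = - \<mu> g" using pr_scale[OF assms(1,3), of "-1"] by simp
  ultimately show ?thesis unfolding e by simp
qed

lemma pr_mono:
  assumes "positive_radon \<mu>" "f \<in> Cb" "g \<in> Cb" "\<forall>p\<in>offdiag. f p \<le> g p"
  shows "\<mu> f \<le> \<mu> g"
proof -
  have e: "(\<lambda>p. g p - f p) = (\<lambda>p. g p + (\<lambda>q. (-1) * f q) p)" by auto
  have "(\<lambda>p. g p - f p) \<in> Cb" unfolding e using assms by (intro Cb_add Cb_scale)
  then have "0 \<le> \<mu> (\<lambda>p. g p - f p)"
    using assms by (intro pr_pos) auto
  then show ?thesis using pr_diff[OF assms(1,3,2)] by simp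
qed

lemma pr_const: "positive_radon \<mu> \<Longrightarrow> \<mu> (\<lambda>_. c) = c * \<mu> (\<lambda>_. 1)"
proof -
  assume a: "positive_radon \<mu>"
  have e: "(\<lambda>_. c) = (\<lambda>p. c * (\<lambda>_. 1::real) p)" by simp
  show ?thesis unfolding e by (rule pr_scale[OF a Cb_const])
qed

lemma pr_bound:
  assumes "positive_radon \<mu>" "f \<in> Cb" "\<forall>p\<in>offdiag. \<bar>f p\<bar> \<le> c"
  shows "\<bar>\<mu> f\<bar> \<le> c * \<mu> (\<lambda>_. 1)"
proof -
  have "\<mu> f \<le> \<mu> (\<lambda>_. c)" using assms by (intro pr_mono) (auto simp: Cb_const abs_le_iff)
  moreover have "\<mu> (\<lambda>_. -c) \<le> \<mu> f" using assms by (intro pr_mono) (auto simp: Cb_const abs_le_iff)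
  ultimately show ?thesis using pr_const[OF assms(1), of c] pr_const[OF assms(1), of "-c"] by auto
qed

definition tr :: "((('a::metric_space \<times> 'a) \<Rightarrow> real) \<Rightarrow> real) \<Rightarrow> ((('a \<times> 'a) \<Rightarrow> real) \<Rightarrow> real)" where
  "tr \<mu> = (\<lambda>f. if f \<in> Cb then \<mu> f else 0)"

lemma tr_pr: "positive_radon \<mu> \<Longrightarrow> positive_radon (tr \<mu>)"
  unfolding positive_radon_def tr_def by (auto simp: Cb_add Cb_scale)

lemma tr_G: "g \<in> Gcone \<Longrightarrow> tr \<mu> g = \<mu> g"
  using G_Cb by (auto simp: tr_def)

lemma preceq_trans: "a \<preccurlyeq> b \<Longrightarrow> b \<preccurlyeq> c \<Longrightarrow> a \<preccurlyeq> c"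
  unfolding preceq_def by force

lemma tr_preceq1: "(tr \<mu> \<preccurlyeq> \<nu>) = (\<mu> \<preccurlyeq> \<nu>)"
  unfolding preceq_def by (simp add: tr_G)

lemma tr_preceq2: "(\<nu> \<preccurlyeq> tr \<mu>) = (\<nu> \<preccurlyeq> \<mu>)"
  unfolding preceq_def by (simp add: tr_G)

definition XX :: "((('a::metric_space \<times> 'a) \<Rightarrow> real) \<Rightarrow> real) \<Rightarrow> ((('a \<times> 'a) \<Rightarrow> real) \<times> real) set" where
  "XX \<mu> = {(g, t). g \<in> Gcone \<and> \<mu> g \<le> t}"

lemma XX_sub: "(XX \<mu> \<subseteq> XX \<kappa>) = (\<kappa> \<preccurlyeq> \<mu>)"
  unfolding XX_def preceq_def by force

lemma chain_min:
  assumes "finite D" "D \<noteq> {}" "\<forall>a\<in>D. \<forall>b\<in>D. r a b \<or> r b a"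
    and tr: "\<And>a b c. r a b \<Longrightarrow> r b c \<Longrightarrow> r a c"
  shows "\<exists>m\<in>D. \<forall>d\<in>D. r m d"
  using assms(1,2,3)
proof (induction D rule: finite_ne_induct)
  case (singleton x) then show ?case by auto
next
  case (insert x F)
  then obtain m where m: "m \<in> F" "\<forall>d\<in>F. r m d" by auto
  have rxx: "r x x" using insert.prems by auto
  show ?case
  proof (cases "r m x")
    case True then show ?thesis using m rxx by auto
  next
    case False
    then have "r x m" using insert.prems m by auto
    then show ?thesis using m rxx tr by blast
  qed
qed

definition bnd :: "(('a::metric_space \<times> 'a) \<Rightarrow> real) \<Rightarrow> real" where
  "bnd f = (SOME c. 0 \<le> c \<and> (\<forall>p\<in>offdiag. \<bar>f p\<bar> \<le> c))"

lemma bnd: "f \<in> Cb \<Longrightarrow> 0 \<le> bnd f \<and> (\<forall>p\<in>offdiag. \<bar>f p\<bar> \<le> bnd f)"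
proof -
  assume "f \<in> Cb"
  then have "bounded (f ` offdiag)" by (simp add: Cb_def)
  then obtain B where "B > 0" "\<forall>p\<in>offdiag. \<bar>f p\<bar> \<le> B" by (auto simp: bounded_pos)
  then have "\<exists>c. 0 \<le> c \<and> (\<forall>p\<in>offdiag. \<bar>f p\<bar> \<le> c)" by (intro exI[of _ B]) auto
  then show ?thesis unfolding bnd_def by (rule someI_ex)
qed

lemma cPi: fixes S :: "'i \<Rightarrow> real set" assumes "\<And>i. compact (S i)" shows "compact (PiE UNIV S)"
  using compactin_PiE[of "\<lambda>i. euclidean" UNIV S] assms
  by (simp add: euclidean_product_topology)

lemma cont_eval: "continuous_on UNIV (\<lambda>\<kappa>::('b \<Rightarrow> real). \<kappa> h)"
  by simp

lemma closed_pr: "closed {\<kappa>::(('a::metric_space \<times> 'a) \<Rightarrow> real) \<Rightarrow> real. positive_radon \<kappa>}"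
proof -
  have "{\<kappa>::(('a \<times> 'a) \<Rightarrow> real) \<Rightarrow> real. positive_radon \<kappa>} =
    (\<Inter>f\<in>Cb. \<Inter>g\<in>Cb. {\<kappa>. \<kappa> (\<lambda>p. f p + g p) = \<kappa> f + \<kappa> g}) \<inter>
    (\<Inter>f\<in>Cb. \<Inter>c. {\<kappa>. \<kappa> (\<lambda>p. c * f p) = c * \<kappa> f}) \<inter>
    (\<Inter>f\<in>{f\<in>Cb. \<forall>p\<in>offdiag. 0 \<le> f p}. {\<kappa>. 0 \<le> \<kappa> f})"
    unfolding positive_radon_def by auto
  moreover have "closed \<dots>"
    by (intro closed_Int closed_INT ballI closed_Collect_eq closed_Collect_le continuous_intros cont_eval)
  ultimately show ?thesis by simp
qed

lemma closed_below: "closed {\<kappa>::(('a::metric_space \<times> 'a) \<Rightarrow> real) \<Rightarrow> real. \<kappa> \<preccurlyeq> \<mu>}"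
proof -
  have "{\<kappa>::(('a \<times> 'a) \<Rightarrow> real) \<Rightarrow> real. \<kappa> \<preccurlyeq> \<mu>} = (\<Inter>g\<in>Gcone. {\<kappa>. \<kappa> g \<le> \<mu> g})"
    unfolding preceq_def by auto
  moreover have "closed \<dots>"
    by (intro closed_INT ballI closed_Collect_le continuous_intros cont_eval)
  ultimately show ?thesis by simp
qed

theorem proposition3p10:
  fixes \<nu> :: "(('a::complete_space \<times> 'a) \<Rightarrow> real) \<Rightarrow> real"
  assumes three: "\<exists>x u y :: 'a. x \<noteq> u \<and> u \<noteq> y \<and> x \<noteq> y"
    and pos: "positive_radon \<nu>"
  shows "\<exists>\<mu>. positive_radon \<mu> \<and> preceq_minimal \<mu> \<and> \<mu> \<preccurlyeq> \<nu>"
proof -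
  define R where "R = \<nu> (\<lambda>_. 1)"
  define S where "S = (\<lambda>f::('a \<times> 'a) \<Rightarrow> real. if f \<in> Cb then {-(bnd f * R) .. bnd f * R} else {0::real})"
  define K where "K = PiE UNIV S"
  define P where "P = {\<mu>. positive_radon \<mu> \<and> \<mu> \<preccurlyeq> \<nu> \<and> (\<forall>f. f \<notin> Cb \<longrightarrow> \<mu> f = 0)}"
  have K_iff: "\<kappa> \<in> K \<longleftrightarrow> (\<forall>f. \<kappa> f \<in> S f)" for \<kappa>
    unfolding K_def by (auto simp: PiE_def Pi_def)
  have compK: "compact K" unfolding K_def S_def by (intro cPi) auto
  have inK: "\<mu> \<in> K" if "\<mu> \<in> P" for \<mu>
  proof -
    have pr: "positive_radon \<mu>" and le: "\<mu> \<preccurlyeq> \<nu>" and z: "\<forall>f. f \<notin> Cb \<longrightarrow> \<mu> f = 0"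
      using that by (auto simp: P_def)
    have m1: "\<mu> (\<lambda>_. 1) \<le> R" using le one_G by (auto simp: preceq_def R_def)
    have m0: "0 \<le> \<mu> (\<lambda>_. 1)" using pr_pos[OF pr Cb_const] by simp
    have "\<mu> f \<in> S f" for f
    proof (cases "f \<in> Cb")
      case True
      have "\<bar>\<mu> f\<bar> \<le> bnd f * \<mu> (\<lambda>_. 1)" using pr_bound[OF pr True] bnd[OF True] by blast
      also have "\<dots> \<le> bnd f * R" using bnd[OF True] m1 by (intro mult_left_mono) auto
      finally show ?thesis using True by (auto simp: S_def abs_le_iff)
    qed (use z in \<open>auto simp: S_def\<close>)
    then show ?thesis by (simp add: K_iff)
  qed
  have trP: "tr \<kappa> \<in> P" if "positive_radon \<kappa>" "\<kappa> \<preccurlyeq> \<nu>" for \<kappa>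
    using that tr_pr[OF that(1)] tr_preceq1[of \<kappa> \<nu>] by (auto simp: P_def tr_def)
  have nuP: "tr \<nu> \<in> P" using trP[OF pos] by (auto simp: preceq_def)
  have "\<exists>M\<in>XX ` P. \<forall>X\<in>XX ` P. M \<subseteq> X \<longrightarrow> X = M"
  proof (rule Zorn_Lemma2, intro ballI)
    fix C assume C: "C \<in> chains (XX ` P)"
    then have CA: "C \<subseteq> XX ` P" and Cch: "\<forall>x\<in>C. \<forall>y\<in>C. x \<subseteq> y \<or> y \<subseteq> x"
      by (auto simp: chains_def chain_subset_def)
    show "\<exists>U\<in>XX ` P. \<forall>X\<in>C. X \<subseteq> U"
    proof (cases "C = {}")
      case True then show ?thesis using nuP by auto
    next
      case False
      define C' where "C' = {\<mu>\<in>P. XX \<mu> \<in> C}"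
      have C'ch: "\<forall>a\<in>C'. \<forall>b\<in>C'. a \<preccurlyeq> b \<or> b \<preccurlyeq> a"
        using Cch by (auto simp: C'_def simp flip: XX_sub)
      obtain \<mu>0 where \<mu>0: "\<mu>0 \<in> C'" using False CA by (auto simp: C'_def)
      define Fm where "Fm = (\<lambda>\<mu>::(('a \<times> 'a) \<Rightarrow> real) \<Rightarrow> real. {\<kappa>. positive_radon \<kappa>} \<inter> {\<kappa>. \<kappa> \<preccurlyeq> \<mu>})"
      have "K \<inter> \<Inter>(Fm ` C') \<noteq> {}"
      proof (rule compact_imp_fip[OF compK])
        show "closed T" if "T \<in> Fm ` C'" for T
          using that by (auto simp: Fm_def intro!: closed_Int closed_pr closed_below)
      next
        fix F' assume F': "finite F'" "F' \<subseteq> Fm ` C'"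
        then obtain D where D: "D \<subseteq> C'" "finite D" "F' = Fm ` D"
          by (meson finite_subset_image)
        show "K \<inter> \<Inter>F' \<noteq> {}"
        proof (cases "D = {}")
          case True
          have "(\<lambda>_. 0) \<in> K" using bnd by (auto simp: K_iff S_def R_def intro!: mult_nonneg_nonneg pr_pos[OF pos Cb_const])
          then show ?thesis using True D by auto
        next
          case False
          obtain m where m: "m \<in> D" "\<forall>d\<in>D. m \<preccurlyeq> d"
            using chain_min[OF D(2) False, of "(\<preccurlyeq>)"] C'ch D(1) preceq_trans by blast
          have "m \<in> P" using m D by (auto simp: C'_def)
          then have "m \<in> K \<inter> \<Inter>F'" using inK m D by (auto simp: Fm_def P_def)
          then show ?thesis by blast
        qed
      qed
      then obtain \<kappa> where k: "\<kappa> \<in> K" "\<forall>\<mu>\<in>C'. positive_radon \<kappa> \<and> \<kappa> \<preccurlyeq> \<mu>"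
        using \<mu>0 by (auto simp: Fm_def split: if_splits)
      have "\<kappa> \<in> P"
        using k \<mu>0 preceq_trans[of \<kappa> \<mu>0 \<nu>] unfolding P_def C'_def
        by (auto simp: K_iff S_def) (metis singletonD)
      moreover have "\<forall>X\<in>C. X \<subseteq> XX \<kappa>"
      proof
        fix X assume "X \<in> C"
        then obtain \<mu> where "\<mu> \<in> P" "X = XX \<mu>" using CA by auto
        then show "X \<subseteq> XX \<kappa>" using k \<open>X \<in> C\<close> by (auto simp: C'_def XX_sub)
      qed
      ultimately show ?thesis by blast
    qed
  qed
  then obtain \<mu> where \<mu>: "\<mu> \<in> P" and max: "\<forall>X\<in>XX ` P. XX \<mu> \<subseteq> X \<longrightarrow> X = XX \<mu>"
    by auto
  have "preceq_minimal \<mu>"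
    unfolding preceq_minimal_def
  proof (intro allI impI)
    fix \<kappa> assume a: "positive_radon \<kappa> \<and> \<kappa> \<preccurlyeq> \<mu>"
    then have "tr \<kappa> \<in> P" using \<mu> trP preceq_trans by (auto simp: P_def)
    moreover have "XX \<mu> \<subseteq> XX (tr \<kappa>)" using a by (simp add: XX_sub tr_preceq1)
    ultimately have "XX (tr \<kappa>) = XX \<mu>" using max by blast
    then have "\<mu> \<preccurlyeq> tr \<kappa>" by (metis XX_sub order_refl)
    then show "\<mu> \<preccurlyeq> \<kappa>" by (simp add: tr_preceq2)
  qed
  then show ?thesis using \<mu> by (auto simp: P_def)
qed

end
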